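(* Let $\kappa \le \mathfrak{c}$ be a cardinal with $\mathrm{cf}(\kappa) > \omega$, let $\mathcal{A}$ and $\mathcal{B}$ be almost disjoint families on $\omega$ of size $\kappa$, and let $h : \mathcal{A} \to \mathcal{B}$ be a bijection. If the sets $A = \{|x \cap y| : x, y \in \mathcal{A},\ x \neq y\}$ and $B = \{|x \cap y| : x, y \in \mathcal{B},\ x \neq y\}$ are almost oscillating, then there is $\mathcal{A}' \subseteq \mathcal{A}$ with $|\mathcal{A}'| = \kappa$ such that the restriction $h \restriction \mathcal{A}' : \mathcal{A}' \to h[\mathcal{A}']$ is of dense oscillation.
   Context: An almost disjoint (AD) family on $\omega$ is a family of infinite subsets of $\omega$ any two distinct members of which have finite intersection. Two sets $A, B \subseteq \omega$ are oscillating if for every two-element set $\{x, y\} \subseteq A$ and every two-element set $\{w, z\} \subseteq B$ we have $|y - x| \neq |z - w|$; they are almost oscillating if there is $n \in \omega$ such that $A \setminus n$ and $B \setminus n$ are oscillating. For AD families $\mathcal{C}, \mathcal{D}$ of size $\kappa$, a bijection $g : \mathcal{C} \to \mathcal{D}$ is of dense oscillation if for every $\mathcal{C}' \subseteq \mathcal{C}$ with $|\mathcal{C}'| = \kappa$ there are $x, y, z \in \mathcal{C}'$ such that $|(x \cap z) \setminus (x \cap y)| \neq |(g(x) \cap g(z)) \setminus (g(x) \cap g(y))|$. *)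

theory Defs
  imports Main "HOL-Library.Countable_Set"
begin

definition AD :: "nat set set \<Rightarrow> bool" where
  "AD F \<longleftrightarrow> (\<forall>x\<in>F. infinite x) \<and> (\<forall>x\<in>F. \<forall>y\<in>F. x \<noteq> y \<longrightarrow> finite (x \<inter> y))"

definition oscillating :: "nat set \<Rightarrow> nat set \<Rightarrow> bool" where
  "oscillating A B \<longleftrightarrow>
     (\<forall>x\<in>A. \<forall>y\<in>A. \<forall>w\<in>B. \<forall>z\<in>B. x \<noteq> y \<longrightarrow> w \<noteq> z \<longrightarrow>
        \<bar>int y - int x\<bar> \<noteq> \<bar>int z - int w\<bar>)"

definition almost_oscillating :: "nat set \<Rightarrow> nat set \<Rightarrow> bool" where
  "almost_oscillating A B \<longleftrightarrow> (\<exists>n::nat. oscillating (A - {..<n}) (B - {..<n}))"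

text \<open>cf(|X|) > omega: no countable subset of the cardinal (realised as the
  canonical cardinal well-order on X) is cofinal, i.e. every countable subset is
  strictly bounded.\<close>
definition cf_gt_omega :: "'a set \<Rightarrow> bool" where
  "cf_gt_omega X \<longleftrightarrow>
     (\<forall>S \<subseteq> X. countable S \<longrightarrow> (\<exists>a\<in>X. \<forall>s\<in>S. (s, a) \<in> card_of X \<and> s \<noteq> a))"

definition dense_oscillation :: "(nat set \<Rightarrow> nat set) \<Rightarrow> nat set set \<Rightarrow> nat set set \<Rightarrow> bool" where
  "dense_oscillation g C D \<longleftrightarrow> bij_betw g C D \<and>
     (\<forall>C' \<subseteq> C. (card_of C', card_of C) \<in> ordIso \<longrightarrow>
        (\<exists>x\<in>C'. \<exists>y\<in>C'. \<exists>z\<in>C'.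
           card ((x \<inter> z) - (x \<inter> y)) \<noteq> card ((g x \<inter> g z) - (g x \<inter> g y))))"

end

theory Submission
  imports Defs
begin

lemma fiber_uncountable:
  assumes "uncountable C" "f ` C \<subseteq> V" "countable V"
  shows "\<exists>v. uncountable {x\<in>C. f x = v}"
proof (rule ccontr)
  assume "\<not> ?thesis"
  hence h: "\<And>v. countable {x\<in>C. f x = v}" by auto
  have "C = (\<Union>v\<in>f ` C. {x\<in>C. f x = v})" by auto
  moreover have "countable (\<Union>v\<in>f ` C. {x\<in>C. f x = v})"
    using h countable_subset[OF assms(2) assms(3)] by (intro countable_UN) auto
  ultimately show False using assms(1) by simp
qed

lemma large_prefix:
  assumes "infinite (x::nat set)"
  shows "\<exists>m. n \<le> card (x \<inter> {..<m})"
proof -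
  obtain X where X: "X \<subseteq> x" "finite X" "card X = n"
    using infinite_arbitrarily_large[OF assms] by blast
  obtain m where "\<forall>k\<in>X. k < m" using finite_nat_bounded[OF X(2)] by auto
  hence "X \<subseteq> x \<inter> {..<m}" using X by auto
  hence "card X \<le> card (x \<inter> {..<m})" by (intro card_mono) auto
  thus ?thesis using X by auto
qed

definition mx :: "nat \<Rightarrow> nat set \<Rightarrow> nat" where
  "mx n x = (LEAST m. n \<le> card (x \<inter> {..<m}))"

lemma mx_prop: "infinite x \<Longrightarrow> n \<le> card (x \<inter> {..<mx n x})"
  unfolding mx_def using large_prefix by (rule LeastI_ex)

lemma countV: "countable ({A::nat set. finite A} \<times> {A::nat set. finite A})"
  using countable_Collect_finite by blast

lemma memI:
  assumes "a \<in> S" "b \<in> S" "a \<noteq> b" "n \<le> card (a \<inter> b)"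
  shows "card (a \<inter> b) \<in> {card (x \<inter> y) | x y. x \<in> S \<and> y \<in> S \<and> x \<noteq> y} - {..<n}"
proof -
  have "card (a \<inter> b) \<in> {card (x \<inter> y) | x y. x \<in> S \<and> y \<in> S \<and> x \<noteq> y}"
    using assms(1-3) by blast
  moreover have "card (a \<inter> b) \<notin> {..<n}" using assms(4) by simp
  ultimately show ?thesis by blast
qed

lemma key:
  assumes ADA: "AD \<A>" and ADB: "AD \<B>" and hB: "h ` \<A> \<subseteq> \<B>" and inj: "inj_on h \<A>"
    and osc: "oscillating ({card (x \<inter> y) | x y. x \<in> \<A> \<and> y \<in> \<A> \<and> x \<noteq> y} - {..<n})
                            ({card (x \<inter> y) | x y. x \<in> \<B> \<and> y \<in> \<B> \<and> x \<noteq> y} - {..<n})"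
    and CA: "C \<subseteq> \<A>" and unc: "uncountable C"
  shows "\<exists>x\<in>C. \<exists>y\<in>C. \<exists>z\<in>C. card ((x \<inter> z) - (x \<inter> y)) \<noteq> card ((h x \<inter> h z) - (h x \<inter> h y))"
proof (rule ccontr)
  assume bad: "\<not> ?thesis"
  have infA: "\<And>x. x \<in> \<A> \<Longrightarrow> infinite x" using ADA unfolding AD_def by auto
  have infB: "\<And>x. x \<in> \<A> \<Longrightarrow> infinite (h x)" using ADB hB unfolding AD_def by auto
  have finA: "\<And>x y. x \<in> \<A> \<Longrightarrow> y \<in> \<A> \<Longrightarrow> x \<noteq> y \<Longrightarrow> finite (x \<inter> y)"
    using ADA unfolding AD_def by auto
  have finB: "\<And>x y. x \<in> \<A> \<Longrightarrow> y \<in> \<A> \<Longrightarrow> x \<noteq> y \<Longrightarrow> finite (h x \<inter> h y)"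
  proof -
    fix x y assume a: "x \<in> \<A>" "y \<in> \<A>" "x \<noteq> y"
    hence "h x \<noteq> h y" "h x \<in> \<B>" "h y \<in> \<B>" using inj hB unfolding inj_on_def by auto
    thus "finite (h x \<inter> h y)" using ADB unfolding AD_def by blast
  qed
  define f where "f x = (x \<inter> {..<mx n x}, h x \<inter> {..<mx n (h x)})" for x
  have fC: "f ` C \<subseteq> {A::nat set. finite A} \<times> {A::nat set. finite A}"
  proof
    fix u assume "u \<in> f ` C"
    then obtain x where "u = f x" by blast
    thus "u \<in> {A::nat set. finite A} \<times> {A::nat set. finite A}" unfolding f_def by simp
  qed
  obtain v where v: "uncountable {x\<in>C. f x = v}"
    using fiber_uncountable[OF unc fC countV] by blast
  define C1 where "C1 = {x\<in>C. f x = v}"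
  have C1C: "C1 \<subseteq> C" using C1_def by auto
  have C1A: "C1 \<subseteq> \<A>" using CA C1_def by auto
  have bigA: "n \<le> card (x \<inter> y)" if xy1: "x \<in> C1" "y \<in> C1" "x \<noteq> y" for x y
  proof -
    have fx: "f x = v" and fy: "f y = v" using xy1 unfolding C1_def by auto
    have e1: "fst v = x \<inter> {..<mx n (x)}" using arg_cong[OF fx, of fst] unfolding f_def by simp
    have e2: "fst v = y \<inter> {..<mx n (y)}" using arg_cong[OF fy, of fst] unfolding f_def by simp
    have s1: "fst v \<subseteq> x" using e1 by (metis Int_lower1)
    have s2: "fst v \<subseteq> y" using e2 by (metis Int_lower1)
    have xA: "x \<in> \<A>" and yA: "y \<in> \<A>" using xy1 C1A by auto
    have "infinite (x)" using infA xA by blast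
    hence "n \<le> card (x \<inter> {..<mx n (x)})" by (rule mx_prop)
    hence c: "n \<le> card (fst v)" using e1 by simp
    have fin: "finite (x \<inter> y)" using finA[OF xA yA xy1(3)] .
    have "card (fst v) \<le> card (x \<inter> y)" using card_mono[OF fin] s1 s2 by blast
    thus ?thesis using c by linarith
  qed
  have bigB: "n \<le> card (h x \<inter> h y)" if xy1: "x \<in> C1" "y \<in> C1" "x \<noteq> y" for x y
  proof -
    have fx: "f x = v" and fy: "f y = v" using xy1 unfolding C1_def by auto
    have e1: "snd v = h x \<inter> {..<mx n (h x)}" using arg_cong[OF fx, of snd] unfolding f_def by simp
    have e2: "snd v = h y \<inter> {..<mx n (h y)}" using arg_cong[OF fy, of snd] unfolding f_def by simp
    have s1: "snd v \<subseteq> h x" using e1 by (metis Int_lower1)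
    have s2: "snd v \<subseteq> h y" using e2 by (metis Int_lower1)
    have xA: "x \<in> \<A>" and yA: "y \<in> \<A>" using xy1 C1A by auto
    have "infinite (h x)" using infB xA by blast
    hence "n \<le> card (h x \<inter> {..<mx n (h x)})" by (rule mx_prop)
    hence c: "n \<le> card (snd v)" using e1 by simp
    have fin: "finite (h x \<inter> h y)" using finB[OF xA yA xy1(3)] .
    have "card (snd v) \<le> card (h x \<inter> h y)" using card_mono[OF fin] s1 s2 by blast
    thus ?thesis using c by linarith
  qed
  have "C1 \<noteq> {}" using v unfolding C1_def by (metis countable_empty)
  then obtain x where x: "x \<in> C1" by auto
  have unc1: "uncountable (C1 - {x})" using v C1_def by simp
  define g where "g y = (x \<inter> y, h x \<inter> h y)" for y
  have gC: "g ` (C1 - {x}) \<subseteq> {A::nat set. finite A} \<times> {A::nat set. finite A}"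
  proof
    fix u assume "u \<in> g ` (C1 - {x})"
    then obtain y where y: "u = g y" "y \<in> C1" "y \<noteq> x" by blast
    have xA': "x \<in> \<A>" and yA': "y \<in> \<A>" using x y C1A by auto
    have "finite (x \<inter> y)" "finite (h x \<inter> h y)" using finA[OF xA' yA'] finB[OF xA' yA'] y(3) by auto
    thus "u \<in> {A::nat set. finite A} \<times> {A::nat set. finite A}" unfolding g_def y(1) by simp
  qed
  obtain w where w: "uncountable {y\<in>C1 - {x}. g y = w}"
    using fiber_uncountable[OF unc1 gC countV] by blast
  define D where "D = {y\<in>C1 - {x}. g y = w}"
  define F where "F = fst w"
  define G where "G = snd w"
  have DF: "\<And>y. y \<in> D \<Longrightarrow> x \<inter> y = F \<and> h x \<inter> h y = G \<and> y \<in> C1 \<and> y \<noteq> x"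
    unfolding D_def F_def G_def g_def by auto
  have "\<exists>y\<in>D. \<exists>z\<in>D. y \<noteq> z \<and> y \<inter> z \<noteq> F"
  proof (rule ccontr)
    assume nn: "\<not> ?thesis"
    have "inj_on (\<lambda>y. LEAST k. k \<in> y - F) D"
    proof (rule inj_onI)
      fix y z assume yz: "y \<in> D" "z \<in> D" "(LEAST k. k \<in> y - F) = (LEAST k. k \<in> z - F)"
      have fF: "finite F" using DF[OF yz(1)] finA x C1A by (metis subsetD)
      have "infinite (y - F)" using infA DF[OF yz(1)] C1A fF by (meson Diff_infinite_finite subsetD)
      then obtain a where "a \<in> y - F" by (metis finite.emptyI ex_in_conv)
      hence ay: "(LEAST k. k \<in> y - F) \<in> y - F" by (rule LeastI)
      have "infinite (z - F)" using infA DF[OF yz(2)] C1A fF by (meson Diff_infinite_finite subsetD)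
      then obtain b where "b \<in> z - F" by (metis finite.emptyI ex_in_conv)
      hence bz: "(LEAST k. k \<in> z - F) \<in> z - F" by (rule LeastI)
      show "y = z"
      proof (rule ccontr)
        assume "y \<noteq> z"
        hence "y \<inter> z = F" using nn yz by auto
        thus False using ay bz yz(3) by auto
      qed
    qed
    hence "countable D" by (rule countableI)
    thus False using w D_def by simp
  qed
  then obtain y z where yz: "y \<in> D" "z \<in> D" "y \<noteq> z" "y \<inter> z \<noteq> F" by blast
  note Dy = DF[OF yz(1)] and Dz = DF[OF yz(2)]
  have xyF: "x \<inter> y = F" and xyG: "h x \<inter> h y = G" and yC1: "y \<in> C1" and yx: "y \<noteq> x"
    using Dy by blast+
  have xzF: "x \<inter> z = F" and xzG: "h x \<inter> h z = G" and zC1: "z \<in> C1"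
    using Dz by blast+
  have yA: "y \<in> \<A>" and zA: "z \<in> \<A>" and xA: "x \<in> \<A>" using yC1 zC1 x C1A by blast+
  have "F \<subseteq> y" using xyF by blast
  moreover have "F \<subseteq> z" using xzF by blast
  ultimately have Fsub: "F \<subseteq> y \<inter> z" by blast
  have "G \<subseteq> h y" using xyG by blast
  moreover have "G \<subseteq> h z" using xzG by blast
  ultimately have Gsub: "G \<subseteq> h y \<inter> h z" by blast
  have fyz: "finite (y \<inter> z)" using finA[OF yA zA yz(3)] .
  have fhyz: "finite (h y \<inter> h z)" using finB[OF yA zA yz(3)] .
  have e1: "card ((y \<inter> z) - (y \<inter> x)) = card (y \<inter> z) - card F"
  proof -
    have "y \<inter> x = F" using xyF by blast
    thus ?thesis using card_Diff_subset[OF finite_subset[OF Fsub fyz] Fsub] by simp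
  qed
  have e2: "card ((h y \<inter> h z) - (h y \<inter> h x)) = card (h y \<inter> h z) - card G"
  proof -
    have "h y \<inter> h x = G" using xyG by blast
    thus ?thesis using card_Diff_subset[OF finite_subset[OF Gsub fhyz] Gsub] by simp
  qed
  have eq: "card (y \<inter> z) - card F = card (h y \<inter> h z) - card G"
  proof -
    have "y \<in> C" "x \<in> C" "z \<in> C" using yC1 zC1 x C1C by blast+
    hence "card ((y \<inter> z) - (y \<inter> x)) = card ((h y \<inter> h z) - (h y \<inter> h x))" using bad by blast
    thus ?thesis using e1 e2 by simp
  qed
  have lt: "card F < card (y \<inter> z)" using Fsub yz(4) fyz by (simp add: psubset_card_mono psubsetI)
  have le: "card G \<le> card (h y \<inter> h z)" using Gsub fhyz by (simp add: card_mono)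
  have hne: "card G \<noteq> card (h y \<inter> h z)" using eq lt le by auto
  have xy: "x \<noteq> y" using yx by blast
  have hyz: "h y \<noteq> h z" and hxy: "h x \<noteq> h y" using inj_onD[OF inj _ yA zA] inj_onD[OF inj _ xA yA] yz(3) xy by blast+
  have hxB: "h x \<in> \<B>" and hyB: "h y \<in> \<B>" and hzB: "h z \<in> \<B>" using hB xA yA zA by blast+
  have a1: "card F \<in> {card (x \<inter> y) | x y. x \<in> \<A> \<and> y \<in> \<A> \<and> x \<noteq> y} - {..<n}"
    using memI[OF xA yA xy bigA[OF x yC1 xy]] unfolding xyF .
  have a2: "card (y \<inter> z) \<in> {card (x \<inter> y) | x y. x \<in> \<A> \<and> y \<in> \<A> \<and> x \<noteq> y} - {..<n}"
    using memI[OF yA zA yz(3) bigA[OF yC1 zC1 yz(3)]] .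
  have b1: "card G \<in> {card (x \<inter> y) | x y. x \<in> \<B> \<and> y \<in> \<B> \<and> x \<noteq> y} - {..<n}"
    using memI[OF hxB hyB hxy bigB[OF x yC1 xy]] unfolding xyG .
  have b2: "card (h y \<inter> h z) \<in> {card (x \<inter> y) | x y. x \<in> \<B> \<and> y \<in> \<B> \<and> x \<noteq> y} - {..<n}"
    using memI[OF hyB hzB hyz bigB[OF yC1 zC1 yz(3)]] .
  have "\<bar>int (card (y \<inter> z)) - int (card F)\<bar> \<noteq> \<bar>int (card (h y \<inter> h z)) - int (card G)\<bar>"
  proof -
    have ne1: "card F \<noteq> card (y \<inter> z)" using lt by simp
    have "\<forall>p\<in>{card (x \<inter> y) | x y. x \<in> \<A> \<and> y \<in> \<A> \<and> x \<noteq> y} - {..<n}. \<forall>q\<in>{card (x \<inter> y) | x y. x \<in> \<A> \<and> y \<in> \<A> \<and> x \<noteq> y} - {..<n}.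
       \<forall>r\<in>{card (x \<inter> y) | x y. x \<in> \<B> \<and> y \<in> \<B> \<and> x \<noteq> y} - {..<n}. \<forall>t\<in>{card (x \<inter> y) | x y. x \<in> \<B> \<and> y \<in> \<B> \<and> x \<noteq> y} - {..<n}.
       p \<noteq> q \<longrightarrow> r \<noteq> t \<longrightarrow> \<bar>int q - int p\<bar> \<noteq> \<bar>int t - int r\<bar>"
      using osc unfolding oscillating_def .
    from this[rule_format, OF a1 a2 b1 b2] ne1 hne show ?thesis by blast
  qed
  thus False using eq lt le by linarith
qed

theorem corollary11:
  fixes \<A> \<B> :: "nat set set" and h :: "nat set \<Rightarrow> nat set"
  assumes "cf_gt_omega \<A>"
    and "AD \<A>" and "AD \<B>"
    and "(card_of \<A>, card_of \<B>) \<in> ordIso"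
    and "bij_betw h \<A> \<B>"
    and "almost_oscillating {card (x \<inter> y) | x y. x \<in> \<A> \<and> y \<in> \<A> \<and> x \<noteq> y}
                            {card (x \<inter> y) | x y. x \<in> \<B> \<and> y \<in> \<B> \<and> x \<noteq> y}"
  shows "\<exists>\<A>' \<subseteq> \<A>. (card_of \<A>', card_of \<A>) \<in> ordIso \<and> dense_oscillation h \<A>' (h ` \<A>')"
proof (intro exI[of _ \<A>] conjI)
  show "\<A> \<subseteq> \<A>" by simp
  show "(card_of \<A>, card_of \<A>) \<in> ordIso" by (rule ordIso_refl[OF card_of_Card_order])
  have uncA: "uncountable \<A>"
  proof
    assume "countable \<A>"
    then obtain a where "a \<in> \<A>" "\<forall>s\<in>\<A>. (s, a) \<in> card_of \<A> \<and> s \<noteq> a"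
      using assms(1) unfolding cf_gt_omega_def by blast
    thus False by auto
  qed
  obtain n where osc: "oscillating ({card (x \<inter> y) | x y. x \<in> \<A> \<and> y \<in> \<A> \<and> x \<noteq> y} - {..<n})
                            ({card (x \<inter> y) | x y. x \<in> \<B> \<and> y \<in> \<B> \<and> x \<noteq> y} - {..<n})"
    using assms(6) unfolding almost_oscillating_def by blast
  have hB: "h ` \<A> \<subseteq> \<B>" and inj: "inj_on h \<A>" using assms(5) unfolding bij_betw_def by auto
  show "dense_oscillation h \<A> (h ` \<A>)"
    unfolding dense_oscillation_def
  proof (intro conjI allI impI)
    show "bij_betw h \<A> (h ` \<A>)" using inj by (simp add: bij_betw_imageI)
    fix C' assume C': "C' \<subseteq> \<A>" "(card_of C', card_of \<A>) \<in> ordIso"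
    then obtain f where f: "bij_betw f \<A> C'" using card_of_ordIso ordIso_symmetric by blast
    have "uncountable C'"
    proof
      assume "countable C'"
      hence "countable (f ` \<A>)" using f by (simp add: bij_betw_def)
      hence "countable \<A>" using f countable_image_inj_on unfolding bij_betw_def by blast
      thus False using uncA by simp
    qed
    thus "\<exists>x\<in>C'. \<exists>y\<in>C'. \<exists>z\<in>C'. card ((x \<inter> z) - (x \<inter> y)) \<noteq> card ((h x \<inter> h z) - (h x \<inter> h y))"
      using key[OF assms(2) assms(3) hB inj osc C'(1)] by blast
  qed
qed

end
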